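(* Let $p>1$ and let $\Omega\subset\mathbb R^N$ be open. Let $h\in L^1_{loc}(\Omega,\mathbb R^l)$ be a vector field and let $A_h\in L^1_{loc}(\Omega)$ be a nonnegative function such that $A_h\le \operatorname{div}_L h$ in the distributional sense, and such that $|h|^pA_h^{1-p}\in L^1_{loc}(\Omega)$. Then for every $u\in C^1_0(\Omega)$, $$\int_\Omega |u|^pA_h\,d\xi\le p^p\int_\Omega \frac{|h|^p}{A_h^{p-1}}|\nabla_L u|^p\,d\xi .$$
   Context: Let $\mu=(\mu_{ij})$, $i=1,\dots,l$, $j=1,\dots,N$, be an $l\times N$ matrix whose entries $\mu_{ij}$ and their derivatives $\partial\mu_{ij}/\partial\xi_j$ are continuous on $\mathbb R^N$. Set $X_i=\sum_{j=1}^N\mu_{ij}(\xi)\partial/\partial\xi_j$ and $\nabla_L=(X_1,\dots,X_l)^T=\mu\nabla$, where $\nabla$ is the Euclidean gradient. For a vector field $h=(h_1,\dots,h_l)$, $\operatorname{div}_L h:=\operatorname{div}(\mu^Th)$. For $h\in L^1_{loc}(\Omega,\mathbb R^l)$ and $A\in L^1_{loc}(\Omega)$, "$A\le\operatorname{div}_Lh$ in the distributional sense" means $\int_\Omega\varphi A\,d\xi\le-\int_\Omega\nabla_L\varphi\cdot h\,d\xi$ for every nonnegative $\varphi\in C^1_0(\Omega)$. *)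

theory Defs
  imports "HOL-Analysis.Analysis"
begin

text \<open>The matrix mu(xi) is an element of real^'n^'l
  (rows indexed by 'l, i.e. i = 1..l; columns indexed by 'n, i.e. j = 1..N).\<close>

definition pd :: "(real^'n \<Rightarrow> real) \<Rightarrow> 'n \<Rightarrow> real^'n \<Rightarrow> real" where
  "pd f j x = frechet_derivative f (at x) (axis j 1)"

definition gradL :: "(real^'n \<Rightarrow> real^'n^'l) \<Rightarrow> (real^'n \<Rightarrow> real) \<Rightarrow> real^'n \<Rightarrow> real^'l" where
  "gradL mu f x = (\<chi> i. \<Sum>j\<in>UNIV. mu x $ i $ j * pd f j x)"

text \<open>C^1_0(Omega): continuously differentiable functions with compact support contained in Omega
  (extended by zero to all of R^N).\<close>
definition C1_0 :: "(real^'n) set \<Rightarrow> (real^'n \<Rightarrow> real) \<Rightarrow> bool" where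
  "C1_0 \<Omega> f \<longleftrightarrow> f differentiable_on UNIV \<and> (\<forall>j. continuous_on UNIV (pd f j))
     \<and> compact (closure {x. f x \<noteq> 0}) \<and> closure {x. f x \<noteq> 0} \<subseteq> \<Omega>"

definition L1_loc :: "(real^'n) set \<Rightarrow> (real^'n \<Rightarrow> 'b::euclidean_space) \<Rightarrow> bool" where
  "L1_loc \<Omega> f \<longleftrightarrow> (\<forall>K. compact K \<and> K \<subseteq> \<Omega> \<longrightarrow> f absolutely_integrable_on K)"

definition distr_le_divL ::
  "(real^'n \<Rightarrow> real^'n^'l) \<Rightarrow> (real^'n) set \<Rightarrow> (real^'n \<Rightarrow> real) \<Rightarrow> (real^'n \<Rightarrow> real^'l) \<Rightarrow> bool" where
  "distr_le_divL mu \<Omega> A h \<longleftrightarrow>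
     (\<forall>\<phi>. C1_0 \<Omega> \<phi> \<and> (\<forall>x. \<phi> x \<ge> 0) \<longrightarrow>
        integral \<Omega> (\<lambda>x. \<phi> x * A x) \<le> - integral \<Omega> (\<lambda>x. gradL mu \<phi> x \<bullet> h x))"

end

theory Submission
  imports Defs
begin


lemma psi_deriv:
  fixes p t :: real assumes p: "p > 1"
  shows "((\<lambda>s. \<bar>s\<bar> powr p) has_real_derivative (p * \<bar>t\<bar> powr (p-1) * sgn t)) (at t)"
proof -
  consider "t > 0" | "t < 0" | "t = 0" by linarith
  then show ?thesis
  proof cases
    case 1
    have "((\<lambda>s. s powr p) has_real_derivative (p * \<bar>t\<bar> powr (p-1) * sgn t)) (at t)"
      using has_real_derivative_powr[OF 1, of p] 1 by simp
    then show ?thesis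
      apply (rule has_field_derivative_transform_within_open[where S="{0<..}"])
      using 1 by auto
  next
    case 2
    have "((\<lambda>s. (-s) powr p) has_real_derivative (p * (-t) powr (p-1) * (-1))) (at t)"
    proof -
      have d1: "((\<lambda>z. z powr p) has_real_derivative p * (-t) powr (p-1)) (at (-t))"
        using has_real_derivative_powr[of "-t" p] 2 by simp
      have d2: "((\<lambda>s. -s) has_real_derivative -1) (at t)"
        by (auto intro: derivative_eq_intros)
      show ?thesis using DERIV_chain2[where f="\<lambda>z. z powr p" and g="\<lambda>s. -s" and x=t, OF d1 d2] by simp
    qed
    then have "((\<lambda>s. (-s) powr p) has_real_derivative (p * \<bar>t\<bar> powr (p-1) * sgn t)) (at t)"
      using 2 by simp
    then show ?thesis
      apply (rule has_field_derivative_transform_within_open[where S="{..<0}"])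
      using 2 by auto
  next
    case 3
    have "((\<lambda>s. (\<bar>s\<bar> powr p - \<bar>0\<bar> powr p) / (s - 0)) \<longlongrightarrow> 0) (at (0::real))"
    proof (rule tendsto_norm_zero_cancel)
      have "((\<lambda>s. \<bar>s\<bar> powr (p-1)) \<longlongrightarrow> 0 powr (p-1)) (at (0::real))"
        using p tendsto_rabs[OF tendsto_ident_at[of "0::real" UNIV]]
      by (intro tendsto_intros) auto
      then have lim: "((\<lambda>s. \<bar>s\<bar> powr (p-1)) \<longlongrightarrow> 0) (at (0::real))" using p by simp
      show "((\<lambda>s. norm ((\<bar>s\<bar> powr p - \<bar>0\<bar> powr p) / (s - 0))) \<longlongrightarrow> 0) (at (0::real))"
      proof (rule Lim_transform_eventually[OF lim])
        show "\<forall>\<^sub>F s in at 0. \<bar>s\<bar> powr (p-1) = norm ((\<bar>s\<bar> powr p - \<bar>0\<bar> powr p) / (s - 0))"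
          unfolding eventually_at_filter
        proof (intro always_eventually allI impI)
          fix s :: real assume "s \<noteq> 0"
          then show "\<bar>s\<bar> powr (p-1) = norm ((\<bar>s\<bar> powr p - \<bar>0\<bar> powr p) / (s - 0))"
            using p by (simp add: powr_diff abs_divide)
        qed
      qed
    qed
    then show ?thesis using 3 by (simp add: has_field_derivative_iff)
  qed
qed

lemma psi'_cont:
  fixes p :: real assumes p: "p > 1"
  shows "continuous_on UNIV (\<lambda>t::real. p * \<bar>t\<bar> powr (p-1) * sgn t)"
proof -
  have "isCont (\<lambda>t::real. p * \<bar>t\<bar> powr (p-1) * sgn t) t" for t
  proof (cases "t = 0")
    case True
    have "((\<lambda>s. \<bar>s\<bar> powr (p-1)) \<longlongrightarrow> 0 powr (p-1)) (at (0::real))"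
      using p tendsto_rabs[OF tendsto_ident_at[of "0::real" UNIV]]
      by (intro tendsto_intros) auto
    then have lim: "((\<lambda>s. p * \<bar>s\<bar> powr (p-1)) \<longlongrightarrow> 0) (at (0::real))" using p
      using tendsto_mult_right_zero by fastforce
    have "((\<lambda>s. p * \<bar>s\<bar> powr (p-1) * sgn s) \<longlongrightarrow> 0) (at (0::real))"
    proof (rule tendsto_0_le[OF lim, where K=1])
      show "\<forall>\<^sub>F x in at 0. norm (p * \<bar>x\<bar> powr (p - 1) * sgn x) \<le> norm (p * \<bar>x\<bar> powr (p - 1)) * 1"
        by (intro always_eventually allI) (auto simp: abs_mult sgn_if)
    qed
    then show ?thesis using True by (simp add: isCont_def)
  next
    case False
    have a: "isCont (\<lambda>t::real. p * \<bar>t\<bar> powr (p-1)) t" using False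
      by (intro continuous_intros) auto
    have b: "isCont (sgn :: real \<Rightarrow> real) t" using False
      by (intro continuous_intros) auto
    show ?thesis using isCont_mult[OF a b] by simp
  qed
  then show ?thesis by (simp add: continuous_on_eq_continuous_at)
qed


lemma powr_1_minus: "(x::real) powr (1-p) = inverse (x powr (p-1))"
  using powr_minus[of x "p-1"] by simp

lemma young_aux:
  fixes p A U G H :: real
  assumes p: "p > 1" and A: "A > 0" and U: "U \<ge> 0" and G: "G \<ge> 0" and H: "H \<ge> 0"
  shows "p * U powr (p-1) * (G * H) \<le> (1-1/p) * (U powr p * A) + p powr (p-1) * (H powr p / A powr (p-1) * G powr p)"
proof -
  define q where "q = p / (p-1)"
  have q: "q > 1" "1/p + 1/q = 1" using p by (auto simp: q_def field_simps)
  define a where "a = U powr (p-1) * A powr ((p-1)/p) * p powr (-(p-1)/p)"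
  define b where "b = p powr ((p-1)/p) * (H * G) * A powr (-(p-1)/p)"
  have a0: "a \<ge> 0" and b0: "b \<ge> 0" using H G by (auto simp: a_def b_def)
  have ab: "a * b = U powr (p-1) * (G * H)"
  proof -
    have "a * b = U powr (p-1) * (G*H) * (A powr ((p-1)/p) * A powr (-(p-1)/p)) * (p powr (-(p-1)/p) * p powr ((p-1)/p))"
      by (simp add: a_def b_def algebra_simps)
    also have "A powr ((p-1)/p) * A powr (-(p-1)/p) = 1" using A p by (simp add: powr_add[symmetric] add_divide_distrib[symmetric])
    also have "p powr (-(p-1)/p) * p powr ((p-1)/p) = 1" using p by (simp add: powr_add[symmetric] add_divide_distrib[symmetric])
    finally show ?thesis by simp
  qed
  have aq: "a powr q = U powr p * A / p"
  proof -
    have "a powr q = (U powr (p-1)) powr q * (A powr ((p-1)/p)) powr q * (p powr (-(p-1)/p)) powr q"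
      using U A p by (simp add: a_def powr_mult)
    also have "\<dots> = U powr p * A powr 1 * p powr (-1)"
    proof -
      have e: "(1-p)/(p-1) = (-1::real)" using p by (simp add: field_simps)
      show ?thesis using p A by (simp add: powr_powr q_def e)
    qed
    finally show ?thesis using A p by (simp add: powr_minus divide_inverse)
  qed
  have bp: "b powr p = p powr (p-1) * (H powr p / A powr (p-1) * G powr p)"
  proof -
    have "b powr p = (p powr ((p-1)/p)) powr p * (H powr p * G powr p) * (A powr (-(p-1)/p)) powr p"
      using H G A p by (simp add: b_def powr_mult)
    also have "\<dots> = p powr (p-1) * (H powr p * G powr p) * A powr (-(p-1))"
      using p by (simp add: powr_powr)
    finally show ?thesis using A by (simp add: powr_1_minus divide_inverse)
  qed
  have "a * b \<le> a powr q / q + b powr p / p"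
    using Youngs_inequality[OF q(1) p _ a0 b0] q(2) by (simp add: add.commute)
  then have "p * (a * b) \<le> p * (a powr q / q) + b powr p"
    using p by (simp add: field_simps)
  moreover have "p * (a powr q / q) = (1-1/p) * (U powr p * A)"
    using p unfolding aq by (simp add: q_def field_simps)
  ultimately show ?thesis using ab bp by (simp add: mult.assoc)
qed

lemma bilinear_inner_vec: "bilinear ((\<bullet>) :: real^'l \<Rightarrow> real^'l \<Rightarrow> real)"
  by (simp add: bilinear_def linear_iff inner_add_left inner_add_right)

theorem mainTheorem1:
  fixes mu :: "real^'n \<Rightarrow> real^'n^'l"
    and \<Omega> :: "(real^'n) set"
    and h :: "real^'n \<Rightarrow> real^'l"
    and A :: "real^'n \<Rightarrow> real"
    and u :: "real^'n \<Rightarrow> real"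
    and p :: real
  assumes mu_cont: "\<And>i j. continuous_on UNIV (\<lambda>x. mu x $ i $ j)"
    and mu_deriv: "\<And>i j. \<exists>d. continuous_on UNIV d \<and>
          (\<forall>x. ((\<lambda>t. mu (x + t *\<^sub>R axis j 1) $ i $ j) has_real_derivative d x) (at 0))"
    and p: "p > 1"
    and \<Omega>: "open \<Omega>"
    and h_loc: "L1_loc \<Omega> h"
    and A_loc: "L1_loc \<Omega> A"
    and A_nonneg: "\<forall>x\<in>\<Omega>. A x \<ge> 0"
    and div: "distr_le_divL mu \<Omega> A h"
    and h_zero: "AE x in lebesgue. x \<in> \<Omega> \<and> A x = 0 \<longrightarrow> h x = 0"
    and w_loc: "L1_loc \<Omega> (\<lambda>x. norm (h x) powr p * A x powr (1 - p))"
    and u: "C1_0 \<Omega> u"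
  shows "integral \<Omega> (\<lambda>x. \<bar>u x\<bar> powr p * A x)
         \<le> p powr p * integral \<Omega> (\<lambda>x. norm (h x) powr p / A x powr (p - 1) * norm (gradL mu u x) powr p)"
  proof -
  define K where "K = closure {x. u x \<noteq> 0}"
  define \<psi>' where "\<psi>' = (\<lambda>t::real. p * \<bar>t\<bar> powr (p-1) * sgn t)"
  define \<phi> where "\<phi> = (\<lambda>x. \<bar>u x\<bar> powr p)"
  define g where "g = gradL mu u"
  have Kc: "compact K" and KO: "K \<subseteq> \<Omega>" and ud: "u differentiable_on UNIV"
    and upd: "\<And>j. continuous_on UNIV (pd u j)"
    using u unfolding C1_0_def K_def by auto
  have Kl: "K \<in> sets lebesgue" using lmeasurable_compact[OF Kc] by (simp add: fmeasurableD)
  have u0: "\<And>x. x \<notin> K \<Longrightarrow> u x = 0" using closure_subset[of "{x. u x \<noteq> 0}"] unfolding K_def by blast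
  have uder: "\<And>x. (u has_derivative frechet_derivative u (at x)) (at x)"
    using ud by (simp add: differentiable_on_def frechet_derivative_works[symmetric])
  have ucont: "continuous_on UNIV u" using ud differentiable_imp_continuous_on by blast
  have pd0: "pd u j x = 0" if "x \<notin> K" for j x
  proof -
    have "((\<lambda>_. 0::real) has_derivative (\<lambda>_. 0)) (at x)" by simp
    then have "(u has_derivative (\<lambda>_. 0)) (at x)"
      apply (rule has_derivative_transform_within_open[where s="- K"])
      using that Kc compact_imp_closed u0 by auto
    then show ?thesis unfolding pd_def using frechet_derivative_at by metis
  qed
  have g0: "g x = 0" if "x \<notin> K" for x
    using pd0[OF that] unfolding g_def gradL_def by (simp add: vec_eq_iff)
  have \<psi>'0: "\<psi>' 0 = 0" by (simp add: \<psi>'_def)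
  have \<phi>der: "(\<phi> has_derivative (\<lambda>v. \<psi>' (u x) * frechet_derivative u (at x) v)) (at x)" for x
  proof -
    have "((\<lambda>s. \<bar>s\<bar> powr p) has_derivative ((*) (\<psi>' (u x)))) (at (u x))"
      using psi_deriv[OF p, of "u x"] unfolding \<psi>'_def has_field_derivative_def .
    from has_derivative_compose[OF uder this] show ?thesis unfolding \<phi>_def by simp
  qed
  have pd\<phi>: "pd \<phi> j x = \<psi>' (u x) * pd u j x" for j x
    unfolding pd_def using frechet_derivative_at[OF \<phi>der[of x]] by metis
  have \<psi>'c: "continuous_on UNIV (\<lambda>x. \<psi>' (u x))"
    using continuous_on_compose2[OF psi'_cont[OF p] ucont] unfolding \<psi>'_def by auto
  have C\<phi>: "C1_0 \<Omega> \<phi>"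
  proof -
    have "\<phi> differentiable_on UNIV" using \<phi>der differentiable_def differentiable_on_def by blast
    moreover have "continuous_on UNIV (pd \<phi> j)" for j
      unfolding pd\<phi> using continuous_on_mult[OF \<psi>'c upd] by simp
    moreover have "{x. \<phi> x \<noteq> 0} = {x. u x \<noteq> 0}" unfolding \<phi>_def by auto
    ultimately show ?thesis using u unfolding C1_0_def by auto
  qed
  have grad\<phi>: "gradL mu \<phi> x = \<psi>' (u x) *\<^sub>R g x" for x
    unfolding g_def gradL_def pd\<phi> by (simp add: vec_eq_iff sum_distrib_left algebra_simps)
  have gc: "continuous_on UNIV g"
    unfolding g_def gradL_def
    by (intro continuous_on_vec_lambda continuous_on_sum continuous_on_mult mu_cont upd)
  define I where "I = integral \<Omega> (\<lambda>x. \<bar>u x\<bar> powr p * A x)"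
  define J where "J = integral \<Omega> (\<lambda>x. norm (h x) powr p / A x powr (p - 1) * norm (gradL mu u x) powr p)"
  have step1: "I \<le> - integral \<Omega> (\<lambda>x. gradL mu \<phi> x \<bullet> h x)"
    using div C\<phi> unfolding distr_le_divL_def I_def \<phi>_def by auto
  obtain N where N: "\<And>x. x \<in> space lebesgue - N \<Longrightarrow> (x \<in> \<Omega> \<and> A x = 0 \<longrightarrow> h x = 0)"
    and Nn: "N \<in> null_sets lebesgue"
    using AE_E3[OF h_zero] by blast
  have negN: "negligible N" using Nn negligible_iff_null_sets by blast
  define h' where "h' = (\<lambda>x. if x \<in> \<Omega> \<and> A x = 0 then 0 else h x)"
  have hh': "\<And>x. x \<notin> N \<Longrightarrow> h' x = h x" using N unfolding h'_def by auto
  have step2: "integral \<Omega> (\<lambda>x. gradL mu \<phi> x \<bullet> h x) = integral \<Omega> (\<lambda>x. gradL mu \<phi> x \<bullet> h' x)"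
    by (rule integral_spike[OF negN]) (simp add: hh')
  define B where "B = (\<lambda>x. (1-1/p) * (\<bar>u x\<bar> powr p * A x) + p powr (p-1) * (norm (h x) powr p / A x powr (p - 1) * norm (gradL mu u x) powr p))"
  have pw: "- (gradL mu \<phi> x \<bullet> h' x) \<le> B x" if x: "x \<in> \<Omega>" for x
  proof (cases "A x = 0")
    case True
    then show ?thesis using x p by (simp add: h'_def B_def)
  next
    case False
    then have Ax: "A x > 0" using A_nonneg x by force
    have "- (gradL mu \<phi> x \<bullet> h' x) = - (\<psi>' (u x) * (g x \<bullet> h x))"
      using False by (simp add: h'_def grad\<phi>)
    also have "\<dots> \<le> \<bar>\<psi>' (u x)\<bar> * \<bar>g x \<bullet> h x\<bar>" by (simp add: abs_mult[symmetric])
    also have "\<dots> \<le> (p * \<bar>u x\<bar> powr (p-1)) * (norm (g x) * norm (h x))"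
    proof (rule mult_mono)
      show "\<bar>\<psi>' (u x)\<bar> \<le> p * \<bar>u x\<bar> powr (p-1)" using p
        by (auto simp: \<psi>'_def abs_mult sgn_if)
      show "\<bar>g x \<bullet> h x\<bar> \<le> norm (g x) * norm (h x)" by (rule Cauchy_Schwarz_ineq2)
    qed (use p in simp_all)
    also have "\<dots> \<le> B x"
      using young_aux[OF p Ax, of "\<bar>u x\<bar>" "norm (g x)" "norm (h x)"]
      unfolding B_def g_def by (simp add: mult.assoc)
    finally show ?thesis .
  qed
  have prod_int: "(\<lambda>x. f x * F x) absolutely_integrable_on K"
    if fc: "continuous_on UNIV f" and F: "F absolutely_integrable_on K"
    for f :: "real^'n \<Rightarrow> real" and F
  proof (rule absolutely_integrable_bounded_measurable_product[OF bilinear_times _ Kl _ F])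
    show "f \<in> borel_measurable (lebesgue_on K)"
      using continuous_imp_measurable_on_sets_lebesgue[OF continuous_on_subset[OF fc subset_UNIV] Kl] .
    show "bounded (f ` K)"
      using compact_imp_bounded[OF compact_continuous_image[OF continuous_on_subset[OF fc subset_UNIV] Kc]] .
  qed
  have lift: "F integrable_on \<Omega>" if "F absolutely_integrable_on K" "\<And>x. x \<notin> K \<Longrightarrow> F x = 0"
    for F :: "real^'n \<Rightarrow> real"
    using integrable_on_superset[OF set_lebesgue_integral_eq_integral(1)[OF that(1)] that(2) KO] .
  have \<phi>c: "continuous_on UNIV \<phi>"
    using \<phi>der differentiable_def differentiable_on_def differentiable_imp_continuous_on by blast
  have AK: "A absolutely_integrable_on K" using A_loc Kc KO unfolding L1_loc_def by blast
  have hK: "h absolutely_integrable_on K" using h_loc Kc KO unfolding L1_loc_def by blast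
  have wK: "(\<lambda>x. norm (h x) powr p * A x powr (1 - p)) absolutely_integrable_on K"
    using w_loc Kc KO unfolding L1_loc_def by blast
  have int1: "(\<lambda>x. \<bar>u x\<bar> powr p * A x) integrable_on \<Omega>"
  proof (rule lift)
    show "(\<lambda>x. \<bar>u x\<bar> powr p * A x) absolutely_integrable_on K"
      using prod_int[OF \<phi>c AK] unfolding \<phi>_def .
    show "\<And>x. x \<notin> K \<Longrightarrow> \<bar>u x\<bar> powr p * A x = 0" using u0 by simp
  qed
  have Gc: "continuous_on UNIV (\<lambda>x. norm (g x) powr p)"
    using continuous_on_powr'[OF continuous_on_norm[OF gc] continuous_on_const[of UNIV p]] p by simp
  have int3: "(\<lambda>x. norm (h x) powr p / A x powr (p - 1) * norm (gradL mu u x) powr p) integrable_on \<Omega>"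
  proof -
    have eq: "(\<lambda>x. norm (h x) powr p / A x powr (p - 1) * norm (gradL mu u x) powr p)
       = (\<lambda>x. norm (g x) powr p * (norm (h x) powr p * A x powr (1 - p)))"
      by (rule ext) (simp add: g_def powr_1_minus divide_inverse)
    have "(\<lambda>x. norm (g x) powr p * (norm (h x) powr p * A x powr (1 - p))) integrable_on \<Omega>"
    proof (rule lift)
      show "(\<lambda>x. norm (g x) powr p * (norm (h x) powr p * A x powr (1 - p))) absolutely_integrable_on K"
        using prod_int[OF Gc wK] .
      show "\<And>x. x \<notin> K \<Longrightarrow> norm (g x) powr p * (norm (h x) powr p * A x powr (1 - p)) = 0"
        using g0 by simp
    qed
    then show ?thesis unfolding eq .
  qed
  have int2: "(\<lambda>x. gradL mu \<phi> x \<bullet> h' x) integrable_on \<Omega>"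
  proof (rule lift)
    have h'K: "h' absolutely_integrable_on K"
      by (rule absolutely_integrable_spike[OF hK negN]) (simp add: hh')
    have gpc: "continuous_on UNIV (gradL mu \<phi>)"
      unfolding grad\<phi> using continuous_on_scaleR[OF \<psi>'c gc] by simp
    show "(\<lambda>x. gradL mu \<phi> x \<bullet> h' x) absolutely_integrable_on K"
    proof (rule absolutely_integrable_bounded_measurable_product[OF bilinear_inner_vec _ Kl _ h'K])
      show "gradL mu \<phi> \<in> borel_measurable (lebesgue_on K)"
        using continuous_imp_measurable_on_sets_lebesgue[OF continuous_on_subset[OF gpc subset_UNIV] Kl] .
      show "bounded (gradL mu \<phi> ` K)"
        using compact_imp_bounded[OF compact_continuous_image[OF continuous_on_subset[OF gpc subset_UNIV] Kc]] .
    qed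
    show "\<And>x. x \<notin> K \<Longrightarrow> gradL mu \<phi> x \<bullet> h' x = 0"
      using u0 \<psi>'0 by (simp add: grad\<phi>)
  qed
  have intB: "B integrable_on \<Omega>"
    unfolding B_def by (intro integrable_add integrable_on_mult_right int1 int3)
  have "integral \<Omega> (\<lambda>x. - (gradL mu \<phi> x \<bullet> h' x)) \<le> integral \<Omega> B"
    by (rule integral_le[OF integrable_neg[OF int2] intB pw])
  also have "integral \<Omega> B = (1-1/p) * I + p powr (p-1) * J"
    unfolding B_def I_def J_def
    using integral_add[OF integrable_on_mult_right[OF int1, of "1-1/p"] integrable_on_mult_right[OF int3, of "p powr (p-1)"]]
    by (simp only: integral_mult_right)
  finally have "I \<le> (1-1/p) * I + p powr (p-1) * J"
    using step1 step2 integral_neg[of \<Omega> "\<lambda>x. gradL mu \<phi> x \<bullet> h' x"] by simp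
  then have "I \<le> p * (p powr (p-1) * J)" using p by (simp add: field_simps)
  moreover have "p powr p = p * p powr (p-1)" using powr_add[of p 1 "p-1"] p by simp
  ultimately show ?thesis unfolding I_def J_def by (simp add: mult.assoc)
qed

end
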